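(* Let the prior joint distribution of the losses $(X,Y)$ be bivariate normal with means $\mu_X,\mu_Y$, standard deviations $\sigma_X,\sigma_Y>0$ and correlation $\rho\in(-1,1)$, let $\alpha\in(0,1)$, let $\rho_1\in(-1,1)$, and let $\tilde\rho$ denote the posterior correlation coefficient of $X$ and $Y$ (under the entropy-pooling posterior described in the context). (i) Under the equality view $\tilde\rho=\rho_1$, $$\mathrm{CoVaR}_\alpha^{Y|\tilde\rho=\rho_1}=\mu_Y+\sigma_Y\left(\frac{1-\rho^2}{1-\rho\rho_1}\right)^{1/2}\Phi^{-1}(\alpha).$$ (ii) Under the inequality view $\tilde\rho\le\rho_1$: if $\rho\le\rho_1$, then $\mathrm{CoVaR}_\alpha^{Y|\tilde\rho\le\rho_1}=\mathrm{VaR}_\alpha^Y$; if $\rho>\rho_1$, then $\mathrm{CoVaR}_\alpha^{Y|\tilde\rho\le\rho_1}=\mathrm{CoVaR}_\alpha^{Y|\tilde\rho=\rho_1}$. (iii) Under the inequality view $\tilde\rho\ge\rho_1$: if $\rho\ge\rho_1$, then $\mathrm{CoVaR}_\alpha^{Y|\tilde\rho\ge\rho_1}=\mathrm{VaR}_\alpha^Y$; if $\rho<\rho_1$, then $\mathrm{CoVaR}_\alpha^{Y|\tilde\rho\ge\rho_1}=\mathrm{CoVaR}_\alpha^{Y|\tilde\rho=\rho_1}$.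
   Context: Entropy-pooling framework: given a "view" $V$ (a constraint on the posterior parameters), the posterior distribution of $(X,Y)$ is the bivariate normal distribution with means $\tilde\mu_X,\tilde\mu_Y$, standard deviations $\tilde\sigma_X,\tilde\sigma_Y>0$ and correlation $\tilde\rho\in(-1,1)$ that minimizes the relative entropy (Kullback–Leibler divergence) $\varepsilon(\tilde f,f)=\int \tilde f\,(\ln\tilde f-\ln f)$ of its density $\tilde f$ with respect to the prior density $f$, among all bivariate normal distributions satisfying $V$. The general CoVaR under view $V$ is $\mathrm{CoVaR}_\alpha^{Y|V}=\tilde\mu_Y+\tilde\sigma_Y\Phi^{-1}(\alpha)$, where $\Phi$ is the standard normal cdf. $\mathrm{VaR}_\alpha^Y=\mu_Y+\sigma_Y\Phi^{-1}(\alpha)$. *)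

theory Defs
  imports "HOL-Probability.Probability"
begin

type_synonym binorm_params = "real \<times> real \<times> real \<times> real \<times> real"

definition mu_X :: "binorm_params \<Rightarrow> real" where "mu_X p = fst p"
definition mu_Y :: "binorm_params \<Rightarrow> real" where "mu_Y p = fst (snd p)"
definition sigma_X :: "binorm_params \<Rightarrow> real" where "sigma_X p = fst (snd (snd p))"
definition sigma_Y :: "binorm_params \<Rightarrow> real" where "sigma_Y p = fst (snd (snd (snd p)))"
definition corr :: "binorm_params \<Rightarrow> real" where "corr p = snd (snd (snd (snd p)))"

definition valid_params :: "binorm_params \<Rightarrow> bool" where
  "valid_params p \<longleftrightarrow> sigma_X p > 0 \<and> sigma_Y p > 0 \<and> -1 < corr p \<and> corr p < 1"

definition binorm_density :: "binorm_params \<Rightarrow> real \<times> real \<Rightarrow> real" where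
  "binorm_density p = (\<lambda>(x, y).
     let mx = mu_X p; my = mu_Y p; sx = sigma_X p; sy = sigma_Y p; r = corr p;
         u = (x - mx) / sx; v = (y - my) / sy
     in exp (- (u\<^sup>2 - 2 * r * u * v + v\<^sup>2) / (2 * (1 - r\<^sup>2)))
        / (2 * pi * sx * sy * sqrt (1 - r\<^sup>2)))"

definition rel_entropy :: "binorm_params \<Rightarrow> binorm_params \<Rightarrow> real" where
  "rel_entropy q p = (\<integral>z. binorm_density q z * (ln (binorm_density q z) - ln (binorm_density p z)) \<partial>(lborel :: (real \<times> real) measure))"

definition is_posterior :: "binorm_params \<Rightarrow> (binorm_params \<Rightarrow> bool) \<Rightarrow> binorm_params \<Rightarrow> bool" where
  "is_posterior prior V q \<longleftrightarrow> valid_params q \<and> V q \<and>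
     (\<forall>q'. valid_params q' \<and> V q' \<longrightarrow> rel_entropy q prior \<le> rel_entropy q' prior)"

definition Phi :: "real \<Rightarrow> real" where
  "Phi x = set_lebesgue_integral lborel {..x} std_normal_density"

definition Phi_inv :: "real \<Rightarrow> real" where
  "Phi_inv a = (THE x. Phi x = a)"

text \<open>CoVaR of Y under the (posterior) parameters q, and VaR of Y under the prior p.\<close>
definition CoVaR :: "real \<Rightarrow> binorm_params \<Rightarrow> real" where
  "CoVaR \<alpha> q = mu_Y q + sigma_Y q * Phi_inv \<alpha>"

definition VaR :: "real \<Rightarrow> binorm_params \<Rightarrow> real" where
  "VaR \<alpha> p = mu_Y p + sigma_Y p * Phi_inv \<alpha>"

end

theory Submission imports Defs begin

lemma binorm_factor:
  assumes s: "s > 0" and t: "t > 0" and c: "c\<^sup>2 < 1"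
  shows "binorm_density (a,b,s,t,c) (x,y) =
    normal_density a s x * normal_density (b + c * t * (x-a)/s) (t * sqrt(1-c\<^sup>2)) y"
proof -
  have c1: "1 - c\<^sup>2 > 0" using c by simp
  have sq: "(sqrt (1-c\<^sup>2))\<^sup>2 = 1 - c\<^sup>2" using c1 by simp
  have pre: "sqrt (2 * pi * s\<^sup>2) * sqrt (2 * pi * (t * sqrt(1-c\<^sup>2))\<^sup>2) = 2 * pi * s * t * sqrt(1-c\<^sup>2)"
  proof -
    have "sqrt (2 * pi * s\<^sup>2) * sqrt (2 * pi * (t * sqrt(1-c\<^sup>2))\<^sup>2) = sqrt ((2 * pi * s * t * sqrt(1-c\<^sup>2))\<^sup>2)"
      by (simp only: real_sqrt_mult[symmetric]) (simp add: power_mult_distrib sq power2_eq_square algebra_simps)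
    also have "\<dots> = 2 * pi * s * t * sqrt(1-c\<^sup>2)" using s t c1 by simp
    finally show ?thesis .
  qed
  have ex: "-(((x - a) / s)\<^sup>2 - 2 * c * ((x - a) / s) * ((y - b) / t) + ((y - b) / t)\<^sup>2) / (2 * (1 - c\<^sup>2))
      = -(x - a)\<^sup>2/ (2 * s\<^sup>2) + -(y - (b + c * t * (x-a)/s))\<^sup>2/ (2 * (t * sqrt(1-c\<^sup>2))\<^sup>2)"
    using s t c1 by (simp add: power_mult_distrib sq field_simps power2_eq_square)
  show ?thesis
    unfolding binorm_density_def normal_density_def mu_X_def mu_Y_def sigma_X_def sigma_Y_def corr_def Let_def
    apply (simp only: fst_conv snd_conv prod.case)
    unfolding ex exp_add pre[symmetric]
    by simp
qed

lemma normal_quad: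
  assumes sp: "\<sigma> > 0"
  shows "has_bochner_integral lborel
    (\<lambda>y. normal_density m \<sigma> y * (A + B * (y - m) + C * (y - m)\<^sup>2)) (A + C * \<sigma>\<^sup>2)"
proof -
  have h0: "has_bochner_integral lborel (\<lambda>y. normal_density m \<sigma> y) 1"
    using normal_moment_even[where k=0 and \<mu>=m and \<sigma>=\<sigma>, OF sp] by simp
  have h1: "has_bochner_integral lborel (\<lambda>y. normal_density m \<sigma> y * (y - m)) 0"
    using normal_moment_odd[where k=0 and \<mu>=m and \<sigma>=\<sigma>, OF sp] by simp
  have h2: "has_bochner_integral lborel (\<lambda>y. normal_density m \<sigma> y * (y - m)\<^sup>2) (\<sigma>\<^sup>2)"
    using normal_moment_even[where k=1 and \<mu>=m and \<sigma>=\<sigma>, OF sp] sp by simp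
  have "has_bochner_integral lborel (\<lambda>y. A * normal_density m \<sigma> y + B * (normal_density m \<sigma> y * (y - m))
     + C * (normal_density m \<sigma> y * (y - m)\<^sup>2)) (A * 1 + B * 0 + C * \<sigma>\<^sup>2)"
    by (intro has_bochner_integral_add has_bochner_integral_mult_right h0 h1 h2)
  then show ?thesis by (simp add: algebra_simps)
qed

definition qp :: "real \<Rightarrow> real \<Rightarrow> real \<Rightarrow> real \<Rightarrow> real \<Rightarrow> real \<Rightarrow> real \<Rightarrow> real \<Rightarrow> real" where
  "qp k0 k1 k2 k3 k4 k5 X Y = k0 + k1 * X + k2 * Y + k3 * X\<^sup>2 + k4 * X * Y + k5 * Y\<^sup>2"

lemma inner2:
  assumes s: "s > 0" and t: "t > 0" and c: "c\<^sup>2 < 1"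
  shows "has_bochner_integral lborel
    (\<lambda>y. binorm_density (a,b,s,t,c) (x,y) * qp k0 k1 k2 k3 k4 k5 ((x-a)/s) ((y-b)/t))
    (normal_density a s x * ((k0 + k5 * (1 - c\<^sup>2)) + (k1 + k2 * c) * ((x-a)/s) + (k3 + k4 * c + k5 * c\<^sup>2) * ((x-a)/s)\<^sup>2))"
proof -
  define X where "X = (x-a)/s"
  define m where "m = b + c * t * (x-a)/s"
  define \<sigma> where "\<sigma> = t * sqrt (1 - c\<^sup>2)"
  have c1: "1 - c\<^sup>2 > 0" using c by simp
  have sp: "\<sigma> > 0" using t c1 by (simp add: \<sigma>_def)
  have sig2: "\<sigma>\<^sup>2 = t\<^sup>2 * (1 - c\<^sup>2)" using c1 by (simp add: \<sigma>_def power_mult_distrib)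
  define A where "A = k0 + k1 * X + k3 * X\<^sup>2 + (k2 + k4 * X) * c * X + k5 * c\<^sup>2 * X\<^sup>2"
  define B where "B = (k2 + k4 * X) / t + 2 * k5 * c * X / t"
  define C where "C = k5 / t\<^sup>2"
  have eq: "qp k0 k1 k2 k3 k4 k5 ((x-a)/s) ((y-b)/t) = A + B * (y - m) + C * (y - m)\<^sup>2" for y
  proof -
    have "(y-b)/t = (y - m)/t + c * X" using t s by (simp add: m_def X_def field_simps)
    then show ?thesis unfolding qp_def A_def B_def C_def X_def[symmetric] using t
      by (simp add: field_simps power2_eq_square)
  qed
  have "has_bochner_integral lborel
    (\<lambda>y. normal_density a s x * (normal_density m \<sigma> y * (A + B * (y - m) + C * (y - m)\<^sup>2)))
    (normal_density a s x * (A + C * \<sigma>\<^sup>2))"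
    by (intro has_bochner_integral_mult_right normal_quad sp)
  moreover have "A + C * \<sigma>\<^sup>2 = (k0 + k5 * (1 - c\<^sup>2)) + (k1 + k2 * c) * X + (k3 + k4 * c + k5 * c\<^sup>2) * X\<^sup>2"
    using t unfolding A_def C_def sig2 by (simp add: field_simps power2_eq_square)
  ultimately show ?thesis
    using binorm_factor[OF s t c, of a b x] eq
    by (simp add: m_def \<sigma>_def X_def mult.assoc)
qed

lemma outer2:
  assumes s: "s > 0"
  shows "has_bochner_integral lborel
    (\<lambda>x. normal_density a s x * (P0 + P1 * ((x-a)/s) + P2 * ((x-a)/s)\<^sup>2)) (P0 + P2)"
proof -
  have "has_bochner_integral lborel
    (\<lambda>x. normal_density a s x * (P0 + (P1/s) * (x-a) + (P2/s\<^sup>2) * (x-a)\<^sup>2)) (P0 + (P2/s\<^sup>2) * s\<^sup>2)"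
    by (rule normal_quad[OF s])
  then show ?thesis using s by (simp add: power_divide)
qed

lemma abs_le_sq: "\<bar>X::real\<bar> \<le> 1 + X\<^sup>2"
proof -
  have "0 \<le> (\<bar>X\<bar> - 1)\<^sup>2" by simp
  then have "0 \<le> \<bar>X\<bar>\<^sup>2 - 2 * \<bar>X\<bar> + 1" by (simp add: power2_eq_square algebra_simps)
  then show ?thesis by simp
qed

lemma qp_bound:
  "\<bar>qp k0 k1 k2 k3 k4 k5 X Y\<bar> \<le> (\<bar>k0\<bar> + \<bar>k1\<bar> + \<bar>k2\<bar> + \<bar>k3\<bar> + \<bar>k4\<bar> + \<bar>k5\<bar>) * qp 1 0 0 1 0 1 X Y"
proof -
  have bX: "\<bar>X\<bar> \<le> 1 + X\<^sup>2 + Y\<^sup>2" using abs_le_sq[of X] by (smt (verit) zero_le_power2)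
  have bY: "\<bar>Y\<bar> \<le> 1 + X\<^sup>2 + Y\<^sup>2" using abs_le_sq[of Y] by (smt (verit) zero_le_power2)
  have bXY: "\<bar>X * Y\<bar> \<le> 1 + X\<^sup>2 + Y\<^sup>2"
  proof -
    have "0 \<le> (\<bar>X\<bar> - \<bar>Y\<bar>)\<^sup>2" by simp
    then have h: "2 * (\<bar>X\<bar> * \<bar>Y\<bar>) \<le> X\<^sup>2 + Y\<^sup>2" by (simp add: power2_eq_square algebra_simps)
    have h2: "0 \<le> \<bar>X\<bar> * \<bar>Y\<bar>" by simp
    show ?thesis unfolding abs_mult using h h2 by linarith
  qed
  have bX2: "\<bar>X\<^sup>2\<bar> \<le> 1 + X\<^sup>2 + Y\<^sup>2" by simp
  have bY2: "\<bar>Y\<^sup>2\<bar> \<le> 1 + X\<^sup>2 + Y\<^sup>2" by simp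
  have b1: "\<bar>1::real\<bar> \<le> 1 + X\<^sup>2 + Y\<^sup>2" by simp
  have "\<bar>qp k0 k1 k2 k3 k4 k5 X Y\<bar> \<le> \<bar>k0\<bar> + \<bar>k1 * X\<bar> + \<bar>k2 * Y\<bar> + \<bar>k3 * X\<^sup>2\<bar> + \<bar>k4 * (X * Y)\<bar> + \<bar>k5 * Y\<^sup>2\<bar>"
    unfolding qp_def mult.assoc by linarith
  also have "\<dots> = \<bar>k0\<bar> * \<bar>1\<bar> + \<bar>k1\<bar> * \<bar>X\<bar> + \<bar>k2\<bar> * \<bar>Y\<bar> + \<bar>k3\<bar> * \<bar>X\<^sup>2\<bar> + \<bar>k4\<bar> * \<bar>X * Y\<bar> + \<bar>k5\<bar> * \<bar>Y\<^sup>2\<bar>"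
    by (simp only: abs_mult abs_one mult_1_right)
  also have "\<dots> \<le> \<bar>k0\<bar> * (1 + X\<^sup>2 + Y\<^sup>2) + \<bar>k1\<bar> * (1 + X\<^sup>2 + Y\<^sup>2) + \<bar>k2\<bar> * (1 + X\<^sup>2 + Y\<^sup>2) + \<bar>k3\<bar> * (1 + X\<^sup>2 + Y\<^sup>2) + \<bar>k4\<bar> * (1 + X\<^sup>2 + Y\<^sup>2) + \<bar>k5\<bar> * (1 + X\<^sup>2 + Y\<^sup>2)"
    by (intro add_mono mult_left_mono bX bY bXY bX2 bY2 b1 abs_ge_zero)
  also have "\<dots> = (\<bar>k0\<bar> + \<bar>k1\<bar> + \<bar>k2\<bar> + \<bar>k3\<bar> + \<bar>k4\<bar> + \<bar>k5\<bar>) * qp 1 0 0 1 0 1 X Y"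
    by (simp add: qp_def algebra_simps)
  finally show ?thesis .
qed

lemma binorm_meas:
  "(\<lambda>z. binorm_density q z * qp k0 k1 k2 k3 k4 k5 ((fst z - a)/s) ((snd z - b)/t)) \<in> borel_measurable (lborel \<Otimes>\<^sub>M lborel)"
  unfolding binorm_density_def Let_def case_prod_beta qp_def by measurable

lemma binorm_nonneg:
  assumes s: "s > 0" and t: "t > 0" and c: "c\<^sup>2 < 1"
  shows "binorm_density (a,b,s,t,c) z \<ge> 0"
  using binorm_factor[OF s t c, of a b "fst z" "snd z"] by simp

lemma binorm_integral:
  assumes s: "s > 0" and t: "t > 0" and c: "c\<^sup>2 < 1"
  shows "integrable lborel (\<lambda>z. binorm_density (a,b,s,t,c) z * qp k0 k1 k2 k3 k4 k5 ((fst z - a)/s) ((snd z - b)/t))"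
    and "(\<integral>z. binorm_density (a,b,s,t,c) z * qp k0 k1 k2 k3 k4 k5 ((fst z - a)/s) ((snd z - b)/t) \<partial>lborel)
          = k0 + k3 + k4 * c + k5"
proof -
  define F where "F = (\<lambda>k0 k1 k2 k3 k4 k5 z. binorm_density (a,b,s,t,c) z * qp k0 k1 k2 k3 k4 k5 ((fst z - a)/s) ((snd z - b)/t))"
  have inn: "has_bochner_integral lborel (\<lambda>y. F k0 k1 k2 k3 k4 k5 (x,y))
    (normal_density a s x * ((k0 + k5 * (1 - c\<^sup>2)) + (k1 + k2 * c) * ((x-a)/s) + (k3 + k4 * c + k5 * c\<^sup>2) * ((x-a)/s)\<^sup>2))"
    for k0 k1 k2 k3 k4 k5 x
    unfolding F_def using inner2[OF s t c] by simp
  have out: "has_bochner_integral lborel (\<lambda>x. \<integral>y. F k0 k1 k2 k3 k4 k5 (x,y) \<partial>lborel)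
     ((k0 + k5 * (1 - c\<^sup>2)) + (k3 + k4 * c + k5 * c\<^sup>2))" for k0 k1 k2 k3 k4 k5
    unfolding has_bochner_integral_integral_eq[OF inn] by (rule outer2[OF s])
  have nn: "F 1 0 0 1 0 1 z \<ge> 0" for z
    unfolding F_def qp_def using binorm_nonneg[OF s t c] by simp
  have int1: "integrable (lborel \<Otimes>\<^sub>M lborel) (F 1 0 0 1 0 1)"
  proof (rule lborel_pair.Fubini_integrable)
    show "F 1 0 0 1 0 1 \<in> borel_measurable (lborel \<Otimes>\<^sub>M lborel)"
      unfolding F_def by (rule binorm_meas)
    show "integrable lborel (\<lambda>x. \<integral>y. norm (F 1 0 0 1 0 1 (x, y)) \<partial>lborel)"
      using out[of 1 0 0 1 0 1] nn by (simp add: has_bochner_integral_iff)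
    show "AE x in lborel. integrable lborel (\<lambda>y. F 1 0 0 1 0 1 (x, y))"
      using inn by (simp add: has_bochner_integral_iff)
  qed
  have intk: "integrable (lborel \<Otimes>\<^sub>M lborel) (F k0 k1 k2 k3 k4 k5)"
  proof (rule Bochner_Integration.integrable_bound)
    show "integrable (lborel \<Otimes>\<^sub>M lborel) (\<lambda>z. (\<bar>k0\<bar> + \<bar>k1\<bar> + \<bar>k2\<bar> + \<bar>k3\<bar> + \<bar>k4\<bar> + \<bar>k5\<bar>) * F 1 0 0 1 0 1 z)"
      using int1 by simp
    show "F k0 k1 k2 k3 k4 k5 \<in> borel_measurable (lborel \<Otimes>\<^sub>M lborel)"
      unfolding F_def by (rule binorm_meas)
    show "AE z in lborel \<Otimes>\<^sub>M lborel. norm (F k0 k1 k2 k3 k4 k5 z) \<le> norm ((\<bar>k0\<bar> + \<bar>k1\<bar> + \<bar>k2\<bar> + \<bar>k3\<bar> + \<bar>k4\<bar> + \<bar>k5\<bar>) * F 1 0 0 1 0 1 z)"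
    proof (rule AE_I2)
      fix z
      have d: "binorm_density (a,b,s,t,c) z \<ge> 0" using binorm_nonneg[OF s t c] .
      have "norm (F k0 k1 k2 k3 k4 k5 z) = binorm_density (a,b,s,t,c) z * \<bar>qp k0 k1 k2 k3 k4 k5 ((fst z - a)/s) ((snd z - b)/t)\<bar>"
        unfolding F_def using d by (simp add: abs_mult)
      also have "\<dots> \<le> binorm_density (a,b,s,t,c) z * ((\<bar>k0\<bar> + \<bar>k1\<bar> + \<bar>k2\<bar> + \<bar>k3\<bar> + \<bar>k4\<bar> + \<bar>k5\<bar>) * qp 1 0 0 1 0 1 ((fst z - a)/s) ((snd z - b)/t))"
        by (intro mult_left_mono qp_bound d)
      also have "\<dots> = (\<bar>k0\<bar> + \<bar>k1\<bar> + \<bar>k2\<bar> + \<bar>k3\<bar> + \<bar>k4\<bar> + \<bar>k5\<bar>) * F 1 0 0 1 0 1 z"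
        unfolding F_def by (simp add: algebra_simps)
      also have "\<dots> = norm ((\<bar>k0\<bar> + \<bar>k1\<bar> + \<bar>k2\<bar> + \<bar>k3\<bar> + \<bar>k4\<bar> + \<bar>k5\<bar>) * F 1 0 0 1 0 1 z)"
        unfolding real_norm_def by (rule abs_of_nonneg[symmetric]) (intro mult_nonneg_nonneg nn, simp)
      finally show "norm (F k0 k1 k2 k3 k4 k5 z) \<le> norm ((\<bar>k0\<bar> + \<bar>k1\<bar> + \<bar>k2\<bar> + \<bar>k3\<bar> + \<bar>k4\<bar> + \<bar>k5\<bar>) * F 1 0 0 1 0 1 z)" .
    qed
  qed
  then show "integrable lborel (\<lambda>z. binorm_density (a,b,s,t,c) z * qp k0 k1 k2 k3 k4 k5 ((fst z - a)/s) ((snd z - b)/t))"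
    unfolding F_def lborel_prod .
  have "integral\<^sup>L (lborel \<Otimes>\<^sub>M lborel) (F k0 k1 k2 k3 k4 k5) = (\<integral>x. (\<integral>y. F k0 k1 k2 k3 k4 k5 (x, y) \<partial>lborel) \<partial>lborel)"
    using lborel_pair.integral_fst'[OF intk] by simp
  also have "\<dots> = k0 + k3 + k4 * c + k5"
    using has_bochner_integral_integral_eq[OF out[of k0 k1 k2 k3 k4 k5]] by (simp add: algebra_simps)
  finally show "(\<integral>z. binorm_density (a,b,s,t,c) z * qp k0 k1 k2 k3 k4 k5 ((fst z - a)/s) ((snd z - b)/t) \<partial>lborel)
          = k0 + k3 + k4 * c + k5"
    unfolding F_def lborel_prod .
qed

lemma ln_binorm:
  assumes s: "s > 0" and t: "t > 0" and c: "c\<^sup>2 < 1"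
  shows "ln (binorm_density (a,b,s,t,c) (x,y)) =
    -(((x-a)/s)\<^sup>2 - 2 * c * ((x-a)/s) * ((y-b)/t) + ((y-b)/t)\<^sup>2) / (2 * (1 - c\<^sup>2))
    - ln (2 * pi * s * t * sqrt (1 - c\<^sup>2))"
proof -
  have c1: "1 - c\<^sup>2 > 0" using c by simp
  have D: "2 * pi * s * t * sqrt (1 - c\<^sup>2) > 0" using s t c1 by simp
  have e: "ln (exp E / (2 * pi * s * t * sqrt (1 - c\<^sup>2))) = E - ln (2 * pi * s * t * sqrt (1 - c\<^sup>2))" for E
    using s t c1 by (simp add: ln_div)
  show ?thesis
    unfolding binorm_density_def mu_X_def mu_Y_def sigma_X_def sigma_Y_def corr_def Let_def
    apply (simp only: fst_conv snd_conv prod.case)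
    by (rule e)
qed

lemma alg_id:
  "-(X\<^sup>2 - 2 * c * X * Y + Y\<^sup>2) * ic / 2 - Lq
     - (-((u * X + dx)\<^sup>2 - 2 * r * (u * X + dx) * (v * Y + dy) + (v * Y + dy)\<^sup>2) * iC / 2 - Lp)
   = qp (Lp - Lq + (dx\<^sup>2 - 2 * r * dx * dy + dy\<^sup>2) * iC / 2)
        ((u * dx - r * u * dy) * iC)
        ((v * dy - r * v * dx) * iC)
        (u\<^sup>2 * iC / 2 - ic / 2)
        (c * ic - r * u * v * iC)
        (v\<^sup>2 * iC / 2 - ic / 2) X Y"
  unfolding qp_def power2_eq_square by (simp add: field_simps)

definition KLf :: "real \<Rightarrow> real \<Rightarrow> real \<Rightarrow> real \<Rightarrow> real \<Rightarrow> real \<Rightarrow> real \<Rightarrow> real \<Rightarrow> real \<Rightarrow> real \<Rightarrow> real" where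
  "KLf mx my sx sy r a b s t c =
    (- ln (s/sx) - ln (t/sy) + ln (1 - r\<^sup>2) / 2 - ln (1 - c\<^sup>2) / 2 - 1
     + (((a-mx)/sx)\<^sup>2 - 2 * r * ((a-mx)/sx) * ((b-my)/sy) + ((b-my)/sy)\<^sup>2
        + (s/sx)\<^sup>2 - 2 * r * c * (s/sx) * (t/sy) + (t/sy)\<^sup>2) / (2 * (1 - r\<^sup>2)))"

lemma rel_entropy_eq:
  assumes sx: "sx > 0" and sy: "sy > 0" and r: "r\<^sup>2 < 1"
    and s: "s > 0" and t: "t > 0" and c: "c\<^sup>2 < 1"
  shows "rel_entropy (a,b,s,t,c) (mx,my,sx,sy,r) = KLf mx my sx sy r a b s t c"
proof -
  have r1: "1 - r\<^sup>2 > 0" using r by simp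
  have c1: "1 - c\<^sup>2 > 0" using c by simp
  define ic where "ic = 1 / (1 - c\<^sup>2)"
  define iC where "iC = 1 / (1 - r\<^sup>2)"
  define u where "u = s/sx"
  define v where "v = t/sy"
  define dx where "dx = (a-mx)/sx"
  define dy where "dy = (b-my)/sy"
  define Lq where "Lq = ln (2 * pi * s * t * sqrt (1 - c\<^sup>2))"
  define Lp where "Lp = ln (2 * pi * sx * sy * sqrt (1 - r\<^sup>2))"
  define k0 where "k0 = Lp - Lq + (dx\<^sup>2 - 2 * r * dx * dy + dy\<^sup>2) * iC / 2"
  define k1 where "k1 = (u * dx - r * u * dy) * iC"
  define k2 where "k2 = (v * dy - r * v * dx) * iC"
  define k3 where "k3 = u\<^sup>2 * iC / 2 - ic / 2"
  define k4 where "k4 = c * ic - r * u * v * iC"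
  define k5 where "k5 = v\<^sup>2 * iC / 2 - ic / 2"
  have pt: "binorm_density (a,b,s,t,c) z * (ln (binorm_density (a,b,s,t,c) z) - ln (binorm_density (mx,my,sx,sy,r) z))
      = binorm_density (a,b,s,t,c) z * qp k0 k1 k2 k3 k4 k5 ((fst z - a)/s) ((snd z - b)/t)" for z
  proof -
    obtain x y where z: "z = (x,y)" by (cases z)
    define X where "X = (x-a)/s"
    define Y where "Y = (y-b)/t"
    have U: "(x-mx)/sx = u * X + dx" using s sx by (simp add: u_def X_def dx_def field_simps)
    have V: "(y-my)/sy = v * Y + dy" using t sy by (simp add: v_def Y_def dy_def field_simps)
    have lq: "ln (binorm_density (a,b,s,t,c) (x,y)) = -(X\<^sup>2 - 2 * c * X * Y + Y\<^sup>2) * ic / 2 - Lq"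
      unfolding ln_binorm[OF s t c] X_def[symmetric] Y_def[symmetric] Lq_def ic_def by simp
    have lp: "ln (binorm_density (mx,my,sx,sy,r) (x,y)) =
       -((u * X + dx)\<^sup>2 - 2 * r * (u * X + dx) * (v * Y + dy) + (v * Y + dy)\<^sup>2) * iC / 2 - Lp"
      unfolding ln_binorm[OF sx sy r] U V Lp_def iC_def by simp
    show ?thesis unfolding z lq lp alg_id fst_conv snd_conv X_def[symmetric] Y_def[symmetric]
      k0_def k1_def k2_def k3_def k4_def k5_def ..
  qed
  have "rel_entropy (a,b,s,t,c) (mx,my,sx,sy,r) = k0 + k3 + k4 * c + k5"
    unfolding rel_entropy_def pt by (rule binorm_integral(2)[OF s t c])
  also have "\<dots> = KLf mx my sx sy r a b s t c"
  proof -
    have L: "Lp - Lq = - ln u - ln v + ln (1 - r\<^sup>2) / 2 - ln (1 - c\<^sup>2) / 2"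
      unfolding Lp_def Lq_def u_def v_def using sx sy s t r1 c1
      by (simp add: ln_mult ln_div ln_sqrt)
    have "k0 + k3 + k4 * c + k5 = (Lp - Lq) + (dx\<^sup>2 - 2 * r * dx * dy + dy\<^sup>2 + u\<^sup>2 - 2 * r * c * u * v + v\<^sup>2) * iC / 2
       - (1 - c\<^sup>2) * ic"
      unfolding k0_def k3_def k4_def k5_def by (simp add: field_simps power2_eq_square)
    also have "(1 - c\<^sup>2) * ic = 1" using c1 by (simp add: ic_def)
    finally show ?thesis unfolding L KLf_def u_def v_def dx_def dy_def iC_def by simp
  qed
  finally show ?thesis .
qed

lemma ln_less_minus_one':
  fixes x :: real
  assumes x: "x > 0" and x1: "x \<noteq> 1"
  shows "ln x < x - 1"
proof -
  have sx: "sqrt x > 0" using x by simp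
  have sx1: "sqrt x \<noteq> 1" using x1 x by auto
  have "ln x = 2 * ln (sqrt x)" using x by (simp add: ln_sqrt)
  also have "\<dots> \<le> 2 * (sqrt x - 1)" using ln_le_minus_one[OF sx] by simp
  also have "\<dots> < x - 1"
  proof -
    have "0 < (sqrt x - 1)\<^sup>2" using sx1 by simp
    also have "\<dots> = x - 2 * sqrt x + 1" using x by (simp add: power2_eq_square algebra_simps)
    finally show ?thesis by simp
  qed
  finally show ?thesis .
qed

lemma core:
  fixes u v k C :: real
  assumes u: "u > 0" and v: "v > 0" and k: "k < 1" and C: "C > 0"
  shows "- ln u - ln v + (u\<^sup>2 - 2 * k * u * v + v\<^sup>2) / (2 * C) \<ge> 1 - ln C + ln (1 - k)"
    and "- ln u - ln v + (u\<^sup>2 - 2 * k * u * v + v\<^sup>2) / (2 * C) \<le> 1 - ln C + ln (1 - k)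
          \<Longrightarrow> u = v \<and> u * v = C / (1 - k)"
proof -
  define x where "x = (1 - k) * (u * v) / C"
  have x0: "x > 0" using u v k C by (simp add: x_def)
  have lx: "ln x = ln (1 - k) + ln u + ln v - ln C"
    using u v k C by (simp add: x_def ln_mult ln_div)
  have q: "(u\<^sup>2 - 2 * k * u * v + v\<^sup>2) / (2 * C) = x + (u - v)\<^sup>2 / (2 * C)"
    using C by (simp add: x_def field_simps power2_eq_square)
  have sq: "(u - v)\<^sup>2 / (2 * C) \<ge> 0" using C by simp
  have le: "ln x \<le> x - 1" by (rule ln_le_minus_one[OF x0])
  show "- ln u - ln v + (u\<^sup>2 - 2 * k * u * v + v\<^sup>2) / (2 * C) \<ge> 1 - ln C + ln (1 - k)"
    unfolding q using lx le sq by linarith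
  assume h: "- ln u - ln v + (u\<^sup>2 - 2 * k * u * v + v\<^sup>2) / (2 * C) \<le> 1 - ln C + ln (1 - k)"
  have x1: "x = 1"
  proof (rule ccontr)
    assume "x \<noteq> 1"
    then have "ln x < x - 1" using ln_less_minus_one'[OF x0] by simp
    then show False using h unfolding q using lx sq by linarith
  qed
  have "(u - v)\<^sup>2 / (2 * C) \<le> 0" using h unfolding q using lx le x1 by simp
  then have "(u - v)\<^sup>2 = 0" using C sq by (simp add: divide_le_0_iff)
  then have "u = v" by simp
  moreover have "u * v = C / (1 - k)" using x1 k C by (simp add: x_def field_simps)
  ultimately show "u = v \<and> u * v = C / (1 - k)" by simp
qed

definition Mf :: "real \<Rightarrow> real \<Rightarrow> real" where
  "Mf r c = ln (1 - r * c) - ln (1 - r\<^sup>2) / 2 - ln (1 - c\<^sup>2) / 2"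

lemma rc_lt1:
  fixes r c :: real
  assumes r: "r\<^sup>2 < 1" and c: "c\<^sup>2 < 1"
  shows "r * c < 1"
proof -
  have "\<bar>r\<bar> < 1" "\<bar>c\<bar> < 1" using r c by (simp_all add: abs_square_less_1)
  then have "\<bar>r * c\<bar> < 1" by (simp add: abs_mult) (metis abs_ge_zero mult_strict_mono' mult_1_right  less_eq_real_def mult_le_one)
  then show ?thesis by simp
qed

lemma Mf_twice:
  assumes r: "r\<^sup>2 < 1" and c: "c\<^sup>2 < 1"
  shows "2 * Mf r c = ln ((1 - r * c)\<^sup>2) - ln ((1 - r\<^sup>2) * (1 - c\<^sup>2))"
proof -
  have k: "1 - r * c > 0" using rc_lt1[OF r c] by simp
  have "ln ((1 - r * c)\<^sup>2) = 2 * ln (1 - r * c)" using k by (simp add: power2_eq_square ln_mult)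
  moreover have "ln ((1 - r\<^sup>2) * (1 - c\<^sup>2)) = ln (1 - r\<^sup>2) + ln (1 - c\<^sup>2)" using r c by (simp add: ln_mult)
  ultimately show ?thesis unfolding Mf_def by simp
qed

lemma Mf_nonneg:
  assumes r: "r\<^sup>2 < 1" and c: "c\<^sup>2 < 1"
  shows "Mf r c \<ge> 0" and "Mf r c \<le> 0 \<Longrightarrow> c = r"
proof -
  have k: "1 - r * c > 0" using rc_lt1[OF r c] by simp
  have p: "(1 - r\<^sup>2) * (1 - c\<^sup>2) > 0" using r c by simp
  have id: "(1 - r * c)\<^sup>2 = (1 - r\<^sup>2) * (1 - c\<^sup>2) + (r - c)\<^sup>2" by (simp add: power2_eq_square algebra_simps)
  show "Mf r c \<ge> 0"
  proof -
    have "ln ((1 - r\<^sup>2) * (1 - c\<^sup>2)) \<le> ln ((1 - r * c)\<^sup>2)" unfolding id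
      by (rule ln_mono) (use p in auto)
    then show ?thesis using Mf_twice[OF r c] by simp
  qed
  assume h: "Mf r c \<le> 0"
  show "c = r"
  proof (rule ccontr)
    assume "c \<noteq> r"
    then have "(r - c)\<^sup>2 > 0" by simp
    then have "ln ((1 - r\<^sup>2) * (1 - c\<^sup>2)) < ln ((1 - r * c)\<^sup>2)" unfolding id
      by (intro ln_strict_mono) (use p in auto)
    then show False using Mf_twice[OF r c] h by simp
  qed
qed

lemma Mf_mono:
  assumes r: "r\<^sup>2 < 1" and c: "c\<^sup>2 < 1" and d: "d\<^sup>2 < 1"
    and o: "(c < d \<and> d \<le> r) \<or> (r \<le> d \<and> d < c)"
  shows "Mf r c > Mf r d"
proof -
  have ar: "\<bar>r\<bar> < 1" and ac: "\<bar>c\<bar> < 1" and ad: "\<bar>d\<bar> < 1" using r c d by (simp_all add: abs_square_less_1)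
  define \<psi> where "\<psi> = 2 * r * (1 + c * d) - (c + d) * (1 + r\<^sup>2)"
  have id: "(1 - r * c)\<^sup>2 * (1 - d\<^sup>2) - (1 - r * d)\<^sup>2 * (1 - c\<^sup>2) = (d - c) * \<psi>"
    unfolding \<psi>_def by (simp add: power2_eq_square algebra_simps)
  have rd: "2 * r * d - (1 + r\<^sup>2) < 0"
  proof -
    have "0 \<le> (r - d)\<^sup>2" by simp
    then have "2 * r * d \<le> r\<^sup>2 + d\<^sup>2" by (simp add: power2_eq_square algebra_simps)
    then show ?thesis using d by simp
  qed
  have e1: "\<psi> = (c - r) * (2 * r * d - (1 + r\<^sup>2)) + (d - r) * (r\<^sup>2 - 1)"
    unfolding \<psi>_def by (simp add: power2_eq_square algebra_simps)
  have r1: "r\<^sup>2 - 1 < 0" using r by simp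
  have pos: "(d - c) * \<psi> > 0"
    using o
  proof
    assume h: "c < d \<and> d \<le> r"
    have "(c - r) * (2 * r * d - (1 + r\<^sup>2)) > 0" using h rd by (intro mult_neg_neg) auto
    moreover have "(d - r) * (r\<^sup>2 - 1) \<ge> 0" using h r1 by (intro mult_nonpos_nonpos) auto
    ultimately have "\<psi> > 0" using e1 by linarith
    then show ?thesis using h by simp
  next
    assume h: "r \<le> d \<and> d < c"
    have "(c - r) * (2 * r * d - (1 + r\<^sup>2)) < 0" using h rd by (intro mult_pos_neg) auto
    moreover have "(d - r) * (r\<^sup>2 - 1) \<le> 0" using h r1 by (intro mult_nonneg_nonpos) auto
    ultimately have "\<psi> < 0" using e1 by linarith
    then show ?thesis using h by (simp add: mult_neg_neg)
  qed
  have A: "(1 - r * c)\<^sup>2 > 0" using rc_lt1[OF r c] by simp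
  have B: "(1 - r * d)\<^sup>2 > 0" using rc_lt1[OF r d] by simp
  have c1: "1 - c\<^sup>2 > 0" and d1: "1 - d\<^sup>2 > 0" and r1': "1 - r\<^sup>2 > 0" using c d r by simp_all
  have lt: "(1 - r * d)\<^sup>2 * (1 - c\<^sup>2) < (1 - r * c)\<^sup>2 * (1 - d\<^sup>2)" using id pos by linarith
  have "ln ((1 - r * d)\<^sup>2 * (1 - c\<^sup>2)) < ln ((1 - r * c)\<^sup>2 * (1 - d\<^sup>2))"
    by (rule ln_strict_mono[OF lt]) (use B c1 in simp)
  then have "ln ((1 - r * d)\<^sup>2) + ln (1 - c\<^sup>2) < ln ((1 - r * c)\<^sup>2) + ln (1 - d\<^sup>2)"
    using A B c1 d1 by (simp add: ln_mult)
  moreover have "2 * Mf r c = ln ((1 - r * c)\<^sup>2) - ln (1 - r\<^sup>2) - ln (1 - c\<^sup>2)"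
    using Mf_twice[OF r c] r1' c1 by (simp add: ln_mult)
  moreover have "2 * Mf r d = ln ((1 - r * d)\<^sup>2) - ln (1 - r\<^sup>2) - ln (1 - d\<^sup>2)"
    using Mf_twice[OF r d] r1' d1 by (simp add: ln_mult)
  ultimately show ?thesis by linarith
qed

lemma KL_lower:
  assumes sx: "sx > 0" and sy: "sy > 0" and r: "r\<^sup>2 < 1"
    and s: "s > 0" and t: "t > 0" and c: "c\<^sup>2 < 1"
  shows "KLf mx my sx sy r a b s t c \<ge> Mf r c"
    and "KLf mx my sx sy r a b s t c \<le> Mf r c \<Longrightarrow> b = my \<and> t = sy * sqrt ((1 - r\<^sup>2) / (1 - r * c))"
proof -
  define u where "u = s/sx"
  define v where "v = t/sy"
  define dx where "dx = (a-mx)/sx"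
  define dy where "dy = (b-my)/sy"
  define C where "C = 1 - r\<^sup>2"
  define k where "k = r * c"
  have C0: "C > 0" using r by (simp add: C_def)
  have k1: "k < 1" using rc_lt1[OF r c] by (simp add: k_def)
  have u0: "u > 0" and v0: "v > 0" using s sx t sy by (simp_all add: u_def v_def)
  define \<Delta> where "\<Delta> = dx\<^sup>2 - 2 * r * dx * dy + dy\<^sup>2"
  have Did: "\<Delta> = (dx - r * dy)\<^sup>2 + C * dy\<^sup>2" by (simp add: \<Delta>_def C_def power2_eq_square algebra_simps)
  have D0: "\<Delta> \<ge> 0" unfolding Did using C0 by simp
  have KL: "KLf mx my sx sy r a b s t c =
     (- ln u - ln v + (u\<^sup>2 - 2 * k * u * v + v\<^sup>2) / (2 * C)) + ln C / 2 - ln (1 - c\<^sup>2) / 2 - 1 + \<Delta> / (2 * C)"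
    unfolding KLf_def u_def[symmetric] v_def[symmetric] dx_def[symmetric] dy_def[symmetric] C_def[symmetric]
      \<Delta>_def k_def using C0 by (simp add: field_simps)
  have M: "Mf r c = ln (1 - k) - ln C / 2 - ln (1 - c\<^sup>2) / 2" by (simp add: Mf_def k_def C_def)
  have D2: "\<Delta> / (2 * C) \<ge> 0" using D0 C0 by simp
  show "KLf mx my sx sy r a b s t c \<ge> Mf r c"
    unfolding KL M using core(1)[OF u0 v0 k1 C0] D2 by linarith
  assume h: "KLf mx my sx sy r a b s t c \<le> Mf r c"
  have h1: "- ln u - ln v + (u\<^sup>2 - 2 * k * u * v + v\<^sup>2) / (2 * C) \<le> 1 - ln C + ln (1 - k)"
    using h unfolding KL M using D2 by linarith
  have "\<Delta> / (2 * C) \<le> 0" using h unfolding KL M using core(1)[OF u0 v0 k1 C0] by linarith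
  then have "\<Delta> = 0" using D2 C0 D0 by (simp add: divide_le_0_iff)
  then have "C * dy\<^sup>2 = 0" unfolding Did by (smt (verit) zero_le_power2 C0 mult_nonneg_nonneg)
  then have "dy = 0" using C0 by simp
  then have b: "b = my" using sy by (simp add: dy_def)
  from core(2)[OF u0 v0 k1 C0 h1] have "u = v" "u * v = C / (1 - k)" by auto
  then have "v\<^sup>2 = C / (1 - k)" by (simp add: power2_eq_square)
  then have "v = sqrt (C / (1 - k))" using v0 by (metis abs_of_pos real_sqrt_abs)
  then have "t = sy * sqrt (C / (1 - k))" using sy by (simp add: v_def field_simps)
  then show "b = my \<and> t = sy * sqrt ((1 - r\<^sup>2) / (1 - r * c))" using b by (simp add: C_def k_def)
qed

lemma KL_star:
  assumes sx: "sx > 0" and sy: "sy > 0" and r: "r\<^sup>2 < 1" and c: "c\<^sup>2 < 1"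
  shows "KLf mx my sx sy r mx my (sx * sqrt ((1 - r\<^sup>2) / (1 - r * c))) (sy * sqrt ((1 - r\<^sup>2) / (1 - r * c))) c = Mf r c"
proof -
  define C where "C = 1 - r\<^sup>2"
  define k where "k = r * c"
  have C0: "C > 0" using r by (simp add: C_def)
  have k1: "1 - k > 0" using rc_lt1[OF r c] by (simp add: k_def)
  define w where "w = sqrt (C / (1 - k))"
  have w0: "w > 0" using C0 k1 by (simp add: w_def)
  have w2: "w\<^sup>2 = C / (1 - k)" using C0 k1 by (simp add: w_def)
  have lw: "ln w = (ln C - ln (1 - k)) / 2" using C0 k1 by (simp add: w_def ln_sqrt ln_div)
  have "KLf mx my sx sy r mx my (sx * w) (sy * w) c = - 2 * ln w + ln C / 2 - ln (1 - c\<^sup>2) / 2 - 1 + (2 * (1 - k) * w\<^sup>2) / (2 * C)"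
    unfolding KLf_def using sx sy by (simp add: C_def k_def power2_eq_square algebra_simps)
  also have "(2 * (1 - k) * w\<^sup>2) / (2 * C) = 1" unfolding w2 using C0 k1 by simp
  also have "- 2 * ln w + ln C / 2 - ln (1 - c\<^sup>2) / 2 - 1 + 1 = Mf r c"
    unfolding lw Mf_def C_def k_def by (simp add: field_simps)
  finally show ?thesis by (simp add: w_def C_def k_def)
qed

lemma sq_lt1: "-1 < (c::real) \<Longrightarrow> c < 1 \<Longrightarrow> c\<^sup>2 < 1"
  by (simp add: abs_square_less_1)

lemma RE:
  assumes sx: "sx > 0" and sy: "sy > 0" and r: "r\<^sup>2 < 1" and q: "valid_params q"
  shows "rel_entropy q (mx,my,sx,sy,r) = KLf mx my sx sy r (mu_X q) (mu_Y q) (sigma_X q) (sigma_Y q) (corr q)"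
proof -
  have qe: "q = (mu_X q, mu_Y q, sigma_X q, sigma_Y q, corr q)"
    by (simp add: mu_X_def mu_Y_def sigma_X_def sigma_Y_def corr_def)
  have "sigma_X q > 0" "sigma_Y q > 0" "(corr q)\<^sup>2 < 1" using q sq_lt1 by (auto simp: valid_params_def)
  from rel_entropy_eq[OF sx sy r this, of "mu_X q" "mu_Y q" mx my] qe show ?thesis by simp
qed

lemma RE_lower:
  assumes sx: "sx > 0" and sy: "sy > 0" and r: "r\<^sup>2 < 1" and q: "valid_params q"
  shows "rel_entropy q (mx,my,sx,sy,r) \<ge> Mf r (corr q)"
proof -
  have "sigma_X q > 0" "sigma_Y q > 0" "(corr q)\<^sup>2 < 1" using q sq_lt1 by (auto simp: valid_params_def)
  from KL_lower(1)[OF sx sy r this] show ?thesis unfolding RE[OF sx sy r q] .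
qed

lemma RE_char:
  assumes sx: "sx > 0" and sy: "sy > 0" and r: "r\<^sup>2 < 1" and q: "valid_params q"
    and h: "rel_entropy q (mx,my,sx,sy,r) \<le> Mf r (corr q)"
  shows "mu_Y q = my \<and> sigma_Y q = sy * sqrt ((1 - r\<^sup>2) / (1 - r * corr q))"
proof -
  have "sigma_X q > 0" "sigma_Y q > 0" "(corr q)\<^sup>2 < 1" using q sq_lt1 by (auto simp: valid_params_def)
  from KL_lower(2)[OF sx sy r this] h show ?thesis unfolding RE[OF sx sy r q] by blast
qed

definition qs :: "binorm_params \<Rightarrow> real \<Rightarrow> binorm_params" where
  "qs p c = (mu_X p, mu_Y p, sigma_X p * sqrt ((1 - (corr p)\<^sup>2) / (1 - corr p * c)),
             sigma_Y p * sqrt ((1 - (corr p)\<^sup>2) / (1 - corr p * c)), c)"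

lemma qs_props:
  assumes sx: "sx > 0" and sy: "sy > 0" and r: "r\<^sup>2 < 1" and c: "-1 < c" "c < 1"
  shows "valid_params (qs (mx,my,sx,sy,r) c)" and "corr (qs (mx,my,sx,sy,r) c) = c"
    and "rel_entropy (qs (mx,my,sx,sy,r) c) (mx,my,sx,sy,r) = Mf r c"
proof -
  have c2: "c\<^sup>2 < 1" using sq_lt1 c by simp
  have k: "1 - r * c > 0" using rc_lt1[OF r c2] by simp
  have w: "sqrt ((1 - r\<^sup>2) / (1 - r * c)) > 0" using k r by simp
  show v: "valid_params (qs (mx,my,sx,sy,r) c)"
    using sx sy w c by (simp add: valid_params_def qs_def sigma_X_def sigma_Y_def corr_def)
  show "corr (qs (mx,my,sx,sy,r) c) = c" by (simp add: qs_def corr_def)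
  show "rel_entropy (qs (mx,my,sx,sy,r) c) (mx,my,sx,sy,r) = Mf r c"
    unfolding RE[OF sx sy r v] using KL_star[OF sx sy r c2, of mx my]
    by (simp add: qs_def mu_X_def mu_Y_def sigma_X_def sigma_Y_def corr_def)
qed

lemma RE_self:
  assumes sx: "sx > 0" and sy: "sy > 0" and r: "r\<^sup>2 < 1"
  shows "rel_entropy (mx,my,sx,sy,r) (mx,my,sx,sy,r) = 0"
proof -
  have v: "valid_params (mx,my,sx,sy,r)" using sx sy r
    using abs_square_less_1[of r] r by (simp add: valid_params_def sigma_X_def sigma_Y_def corr_def abs_less_iff)
  have r1: "1 - r\<^sup>2 > 0" using r by simp
  show ?thesis unfolding RE[OF sx sy r v] KLf_def using sx sy r1
    by (simp add: mu_X_def mu_Y_def sigma_X_def sigma_Y_def corr_def field_simps power2_eq_square)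
qed

theorem theorem3p4:
  fixes mx my sx sy r \<alpha> r1 :: real
  assumes "sx > 0" and "sy > 0" and "-1 < r" and "r < 1"
    and "0 < \<alpha>" and "\<alpha> < 1" and "-1 < r1" and "r1 < 1"
  shows
    \<comment> \<open>(i) equality view\<close>
    "((\<exists>q. is_posterior (mx, my, sx, sy, r) (\<lambda>q. corr q = r1) q) \<and>
      (\<forall>q. is_posterior (mx, my, sx, sy, r) (\<lambda>q. corr q = r1) q \<longrightarrow>
         CoVaR \<alpha> q = my + sy * ((1 - r\<^sup>2) / (1 - r * r1)) powr (1/2) * Phi_inv \<alpha>))
     \<and>
     \<comment> \<open>(ii) view corr <= r1\<close>
     ((\<exists>q. is_posterior (mx, my, sx, sy, r) (\<lambda>q. corr q \<le> r1) q) \<and>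
      (r \<le> r1 \<longrightarrow> (\<forall>q. is_posterior (mx, my, sx, sy, r) (\<lambda>q. corr q \<le> r1) q \<longrightarrow>
         CoVaR \<alpha> q = VaR \<alpha> (mx, my, sx, sy, r))) \<and>
      (r > r1 \<longrightarrow> (\<forall>q q'. is_posterior (mx, my, sx, sy, r) (\<lambda>q. corr q \<le> r1) q \<longrightarrow>
         is_posterior (mx, my, sx, sy, r) (\<lambda>q. corr q = r1) q' \<longrightarrow> CoVaR \<alpha> q = CoVaR \<alpha> q')))
     \<and>
     \<comment> \<open>(iii) view corr >= r1\<close>
     ((\<exists>q. is_posterior (mx, my, sx, sy, r) (\<lambda>q. corr q \<ge> r1) q) \<and>
      (r \<ge> r1 \<longrightarrow> (\<forall>q. is_posterior (mx, my, sx, sy, r) (\<lambda>q. corr q \<ge> r1) q \<longrightarrow>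
         CoVaR \<alpha> q = VaR \<alpha> (mx, my, sx, sy, r))) \<and>
      (r < r1 \<longrightarrow> (\<forall>q q'. is_posterior (mx, my, sx, sy, r) (\<lambda>q. corr q \<ge> r1) q \<longrightarrow>
         is_posterior (mx, my, sx, sy, r) (\<lambda>q. corr q = r1) q' \<longrightarrow> CoVaR \<alpha> q = CoVaR \<alpha> q')))"
proof -
  let ?p = "(mx, my, sx, sy, r)"
  have r2: "r\<^sup>2 < 1" using assms sq_lt1 by simp
  have sx: "sx > 0" and sy: "sy > 0" using assms by simp_all
  have r12: "r1\<^sup>2 < 1" using assms sq_lt1 by simp
  define W where "W = sqrt ((1 - r\<^sup>2) / (1 - r * r1))"
  have k: "1 - r * r1 > 0" using rc_lt1[OF r2 r12] by simp
  have Wp: "((1 - r\<^sup>2) / (1 - r * r1)) powr (1/2) = W"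
    unfolding W_def using k r2 by (intro powr_half_sqrt) simp
  define q0 where "q0 = qs ?p r1"
  note q0 = qs_props[OF sx sy r2 assms(7,8), of mx my, folded q0_def]
  have pv: "valid_params ?p" using assms by (simp add: valid_params_def sigma_X_def sigma_Y_def corr_def)
  have self: "rel_entropy ?p ?p = 0" by (rule RE_self[OF sx sy r2])
  have Mr: "Mf r r = 0" using Mf_nonneg[OF r2 r2] by (simp add: Mf_def power2_eq_square)
  have charC: "CoVaR \<alpha> q = my + sy * W * Phi_inv \<alpha>"
    if v: "valid_params q" and cq: "corr q = r1" and le: "rel_entropy q ?p \<le> Mf r r1" for q
  proof -
    have "mu_Y q = my \<and> sigma_Y q = sy * W"
      using RE_char[OF sx sy r2 v, of mx my] le cq by (simp add: W_def)
    then show ?thesis by (simp add: CoVaR_def)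
  qed
  have Ai: "is_posterior ?p (\<lambda>q. corr q = r1) q0"
    unfolding is_posterior_def
  proof (intro conjI allI impI)
    fix q' assume h: "valid_params q' \<and> corr q' = r1"
    show "rel_entropy q0 ?p \<le> rel_entropy q' ?p" using RE_lower[OF sx sy r2, of q' mx my] h q0 by simp
  qed (use q0 in auto)
  have Bi: "CoVaR \<alpha> q = my + sy * W * Phi_inv \<alpha>" if "is_posterior ?p (\<lambda>q. corr q = r1) q" for q
  proof -
    have vc: "valid_params q" "corr q = r1" using that unfolding is_posterior_def by auto
    have allP: "\<forall>q'. valid_params q' \<and> corr q' = r1 \<longrightarrow> rel_entropy q ?p \<le> rel_entropy q' ?p"
      using that unfolding is_posterior_def by blast
    have "rel_entropy q ?p \<le> rel_entropy q0 ?p" by (rule allP[rule_format]) (use q0 in simp)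
    note vc this
    then show ?thesis using charC q0 by simp
  qed
  have VaR_eq: "VaR \<alpha> ?p = my + sy * Phi_inv \<alpha>" by (simp add: VaR_def mu_Y_def sigma_Y_def)
  have prior_case: "CoVaR \<alpha> q = VaR \<alpha> ?p"
    if v: "valid_params q" and le: "rel_entropy q ?p \<le> 0" for q
  proof -
    have c2: "(corr q)\<^sup>2 < 1" using v sq_lt1 by (auto simp: valid_params_def)
    have "Mf r (corr q) \<le> 0" using RE_lower[OF sx sy r2 v, of mx my] le by linarith
    then have cr: "corr q = r" using Mf_nonneg(2)[OF r2 c2] by simp
    have "mu_Y q = my \<and> sigma_Y q = sy * sqrt ((1 - r\<^sup>2) / (1 - r * corr q))"
      using RE_char[OF sx sy r2 v, of mx my] le cr Mr by simp
    moreover have "(1 - r\<^sup>2) / (1 - r * r) = 1" using r2 by (simp add: power2_eq_square)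
    ultimately show ?thesis using cr by (simp add: CoVaR_def VaR_eq)
  qed
  have prior_post: "is_posterior ?p V ?p" if "V ?p" for V
    unfolding is_posterior_def using pv that self RE_lower[OF sx sy r2] Mf_nonneg(1)[OF r2] sq_lt1
    by (auto simp: valid_params_def) (smt (verit))
  have ii1: "\<exists>q. is_posterior ?p (\<lambda>q. corr q \<le> r1) q"
  proof (cases "r \<le> r1")
    case True
    have "is_posterior ?p (\<lambda>q. corr q \<le> r1) ?p" using True by (intro prior_post) (simp add: corr_def)
    then show ?thesis by blast
  next
    case False
    have "is_posterior ?p (\<lambda>q. corr q \<le> r1) q0"
      unfolding is_posterior_def
    proof (intro conjI allI impI)
      fix q' assume h: "valid_params q' \<and> corr q' \<le> r1"
      have c2: "(corr q')\<^sup>2 < 1" using h sq_lt1 by (auto simp: valid_params_def)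
      have "Mf r r1 \<le> Mf r (corr q')"
      proof (cases "corr q' = r1")
        case False
        then show ?thesis using Mf_mono[OF r2 c2 r12] h \<open>\<not> r \<le> r1\<close> by fastforce
      qed simp
      then show "rel_entropy q0 ?p \<le> rel_entropy q' ?p" using RE_lower[OF sx sy r2, of q' mx my] h q0 by simp
    qed (use q0 in auto)
    then show ?thesis by blast
  qed
  have ii2: "r \<le> r1 \<longrightarrow> (\<forall>q. is_posterior ?p (\<lambda>q. corr q \<le> r1) q \<longrightarrow> CoVaR \<alpha> q = VaR \<alpha> ?p)"
  proof (intro impI allI)
    fix q assume rr: "r \<le> r1" and P: "is_posterior ?p (\<lambda>q. corr q \<le> r1) q"
    have v: "valid_params q" using P unfolding is_posterior_def by auto
    have allP: "\<forall>q'. valid_params q' \<and> corr q' \<le> r1 \<longrightarrow> rel_entropy q ?p \<le> rel_entropy q' ?p"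
      using P unfolding is_posterior_def by blast
    have "rel_entropy q ?p \<le> rel_entropy ?p ?p" by (rule allP[rule_format]) (use pv rr in \<open>simp add: corr_def\<close>)
    then show "CoVaR \<alpha> q = VaR \<alpha> ?p" using prior_case[OF v] self by simp
  qed
  have ii3: "r > r1 \<longrightarrow> (\<forall>q q'. is_posterior ?p (\<lambda>q. corr q \<le> r1) q \<longrightarrow>
         is_posterior ?p (\<lambda>q. corr q = r1) q' \<longrightarrow> CoVaR \<alpha> q = CoVaR \<alpha> q')"
  proof (intro impI allI)
    fix q q' assume rr: "r > r1" and P: "is_posterior ?p (\<lambda>q. corr q \<le> r1) q"
      and P': "is_posterior ?p (\<lambda>q. corr q = r1) q'"
    have v: "valid_params q" and cle: "corr q \<le> r1" using P unfolding is_posterior_def by auto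
    have allP: "\<forall>q'. valid_params q' \<and> corr q' \<le> r1 \<longrightarrow> rel_entropy q ?p \<le> rel_entropy q' ?p"
      using P unfolding is_posterior_def by blast
    have le: "rel_entropy q ?p \<le> rel_entropy q0 ?p" by (rule allP[rule_format]) (use q0 in simp)
    have c2: "(corr q)\<^sup>2 < 1" using v sq_lt1 by (auto simp: valid_params_def)
    have ceq: "corr q = r1"
    proof (rule ccontr)
      assume "corr q \<noteq> r1"
      then have "Mf r (corr q) > Mf r r1" using Mf_mono[OF r2 c2 r12] cle rr by fastforce
      then show False using RE_lower[OF sx sy r2 v, of mx my] le q0 by simp
    qed
    have "CoVaR \<alpha> q = my + sy * W * Phi_inv \<alpha>" using charC[OF v ceq] le q0 by simp
    then show "CoVaR \<alpha> q = CoVaR \<alpha> q'" using Bi[OF P'] by simp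
  qed
  have iii1: "\<exists>q. is_posterior ?p (\<lambda>q. corr q \<ge> r1) q"
  proof (cases "r \<ge> r1")
    case True
    have "is_posterior ?p (\<lambda>q. corr q \<ge> r1) ?p" using True by (intro prior_post) (simp add: corr_def)
    then show ?thesis by blast
  next
    case False
    have "is_posterior ?p (\<lambda>q. corr q \<ge> r1) q0"
      unfolding is_posterior_def
    proof (intro conjI allI impI)
      fix q' assume h: "valid_params q' \<and> corr q' \<ge> r1"
      have c2: "(corr q')\<^sup>2 < 1" using h sq_lt1 by (auto simp: valid_params_def)
      have "Mf r r1 \<le> Mf r (corr q')"
      proof (cases "corr q' = r1")
        case False
        then show ?thesis using Mf_mono[OF r2 c2 r12] h \<open>\<not> r \<ge> r1\<close> by fastforce
      qed simp
      then show "rel_entropy q0 ?p \<le> rel_entropy q' ?p" using RE_lower[OF sx sy r2, of q' mx my] h q0 by simp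
    qed (use q0 in auto)
    then show ?thesis by blast
  qed
  have iii2: "r \<ge> r1 \<longrightarrow> (\<forall>q. is_posterior ?p (\<lambda>q. corr q \<ge> r1) q \<longrightarrow> CoVaR \<alpha> q = VaR \<alpha> ?p)"
  proof (intro impI allI)
    fix q assume rr: "r \<ge> r1" and P: "is_posterior ?p (\<lambda>q. corr q \<ge> r1) q"
    have v: "valid_params q" using P unfolding is_posterior_def by auto
    have allP: "\<forall>q'. valid_params q' \<and> corr q' \<ge> r1 \<longrightarrow> rel_entropy q ?p \<le> rel_entropy q' ?p"
      using P unfolding is_posterior_def by blast
    have "rel_entropy q ?p \<le> rel_entropy ?p ?p" by (rule allP[rule_format]) (use pv rr in \<open>simp add: corr_def\<close>)
    then show "CoVaR \<alpha> q = VaR \<alpha> ?p" using prior_case[OF v] self by simp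
  qed
  have iii3: "r < r1 \<longrightarrow> (\<forall>q q'. is_posterior ?p (\<lambda>q. corr q \<ge> r1) q \<longrightarrow>
         is_posterior ?p (\<lambda>q. corr q = r1) q' \<longrightarrow> CoVaR \<alpha> q = CoVaR \<alpha> q')"
  proof (intro impI allI)
    fix q q' assume rr: "r < r1" and P: "is_posterior ?p (\<lambda>q. corr q \<ge> r1) q"
      and P': "is_posterior ?p (\<lambda>q. corr q = r1) q'"
    have v: "valid_params q" and cle: "corr q \<ge> r1" using P unfolding is_posterior_def by auto
    have allP: "\<forall>q'. valid_params q' \<and> corr q' \<ge> r1 \<longrightarrow> rel_entropy q ?p \<le> rel_entropy q' ?p"
      using P unfolding is_posterior_def by blast
    have le: "rel_entropy q ?p \<le> rel_entropy q0 ?p" by (rule allP[rule_format]) (use q0 in simp)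
    have c2: "(corr q)\<^sup>2 < 1" using v sq_lt1 by (auto simp: valid_params_def)
    have ceq: "corr q = r1"
    proof (rule ccontr)
      assume "corr q \<noteq> r1"
      then have "Mf r (corr q) > Mf r r1" using Mf_mono[OF r2 c2 r12] cle rr by fastforce
      then show False using RE_lower[OF sx sy r2 v, of mx my] le q0 by simp
    qed
    have "CoVaR \<alpha> q = my + sy * W * Phi_inv \<alpha>" using charC[OF v ceq] le q0 by simp
    then show "CoVaR \<alpha> q = CoVaR \<alpha> q'" using Bi[OF P'] by simp
  qed
  show ?thesis
    using Ai Bi ii1 ii2 ii3 iii1 iii2 iii3 unfolding Wp by blast
qed

end
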